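(* Let $m,n\in\mathbb{N}$ be coprime with $1\le m\le n-1$, and let $\Gamma$ be a $\mathbb{D}_n$-symmetric billiard curve with equivariant parametrization $\gamma$. Let $Z_i=\gamma(X_i)$ be a $\mathbb{D}_n$-symmetric, Birkhoff, $n$-periodic billiard orbit of rotation number $\frac mn$. Let $(p,q)=s(n,m)$ with $s\in\mathbb{N}$, so that $X\in\mathbb{X}_{n,m}\subset\mathbb{X}_{p,q}$. Consider the Hessian of $$W_{p,q}(x_1,\dots,x_p)=\sum_{j=1}^{p-1}L(x_j,x_{j+1})+L(x_p,x_1+q)$$ at $(X_1,\dots,X_p)$. Then: - The Hessian is the symmetric tridiagonal circulant $p\times p$ matrix with diagonal entries $2\alpha$, and entries $\beta$ on the sub- and superdiagonals and in the two corners $(1,p),(p,1)$. Here $\alpha=\partial_{2,2}L(X_{i-1},X_i)=\partial_{1,1}L(X_i,X_{i+1})$ and $\beta=\partial_{1,2}L(X_i,X_{i+1})$ are independent of $i$. - For every $N\in\mathbb{Z}$, the vectors $v_i=\sin(2\pi Ni/p)$ and $w_i=\cos(2\pi Ni/p)$ ($i=1,\dots,p$) are eigenvectors with eigenvalue $2\alpha+2\beta\cos(2\pi N/p)$. - If $\gamma$ has constant speed $\|\gamma'\|\equiv c$, then $$\alpha=c^2\sin(m\pi/n)\Big(\frac{\sin(m\pi/n)}{L}-\kappa\Big),\qquad \beta=\frac{c^2\sin^2(m\pi/n)}{L},$$ where $L=\|Z_{i+1}-Z_i\|$ and $\kappa=\kappa(Z_i)$ (both independent of $i$).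
   Context: $\mathbb{D}_n=\langle R,S\rangle$, where $R$ is rotation by $2\pi/n$ and $S$ is the horizontal reflection. $\Gamma$ is a $C^2$ simple closed $\mathbb{D}_n$-invariant curve bounding a strictly convex domain, parametrized counterclockwise by a $1$-periodic $C^2$ immersion $\gamma$ descending to an embedding of $\mathbb{R}/\mathbb{Z}$, with $\gamma(x+1/n)=R\gamma(x)$ and $\gamma(-x)=S\gamma(x)$. $L(x,X)=\|\gamma(x)-\gamma(X)\|$, $\mathbb{X}_{p,q}=\{x:x_{i+p}=x_i+q\}$, and $\kappa$ is curvature. A billiard orbit satisfies the reflection law at each point, with lift $X$ ($\gamma(X_i)=Z_i$, $0<X_{i+1}-X_i<1$). $\mathbb{D}_n$-symmetric means each $g\in\mathbb{D}_n$ maps $Z_i$ to $Z_{k+i}$ for all $i$, or to $Z_{k-i}$ for all $i$, for some $k$. Birkhoff means $X_i\le X_j+l\Rightarrow X_{i+m}\le X_{j+m}+l$ for all integers. *)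

theory Defs
  imports "HOL-Complex_Analysis.Complex_Analysis"
begin

text \<open>The plane is modelled as the complex numbers. R = rotation by 2 pi/n,
  S = reflection in the horizontal axis (complex conjugation).\<close>

definition rotR :: "nat \<Rightarrow> complex \<Rightarrow> complex" where
  "rotR n z = cis (2 * pi / real n) * z"

definition reflS :: "complex \<Rightarrow> complex" where
  "reflS z = cnj z"

definition dihedral :: "nat \<Rightarrow> (complex \<Rightarrow> complex) set" where
  "dihedral n = {(\<lambda>z. cis (2 * pi * real_of_int j / real n) * z) | j :: int. True}
              \<union> {(\<lambda>z. cis (2 * pi * real_of_int j / real n) * cnj z) | j :: int. True}"

definition strictly_convex_domain :: "complex set \<Rightarrow> bool" where
  "strictly_convex_domain \<Omega> \<longleftrightarrow> open \<Omega> \<and> bounded \<Omega> \<and> \<Omega> \<noteq> {} \<and> convex \<Omega> \<and>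
     (\<forall>x\<in>closure \<Omega>. \<forall>y\<in>closure \<Omega>. x \<noteq> y \<longrightarrow> open_segment x y \<subseteq> \<Omega>)"

text \<open>gamma is a 1-periodic C^2 immersion (with derivatives gamma1, gamma2) descending to an
  embedding of R/Z, D_n-equivariant, whose image bounds a strictly convex domain and which
  runs counterclockwise (winding number 1 around interior points).\<close>
definition Dn_billiard_param ::
  "nat \<Rightarrow> (real \<Rightarrow> complex) \<Rightarrow> (real \<Rightarrow> complex) \<Rightarrow> (real \<Rightarrow> complex) \<Rightarrow> bool" where
  "Dn_billiard_param n \<gamma> \<gamma>1 \<gamma>2 \<longleftrightarrow>
     (\<forall>x. (\<gamma> has_vector_derivative \<gamma>1 x) (at x)) \<and>
     (\<forall>x. (\<gamma>1 has_vector_derivative \<gamma>2 x) (at x)) \<and>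
     continuous_on UNIV \<gamma>2 \<and>
     (\<forall>x. \<gamma>1 x \<noteq> 0) \<and>
     (\<forall>x y. \<gamma> x = \<gamma> y \<longleftrightarrow> (\<exists>k::int. x - y = real_of_int k)) \<and>
     (\<exists>\<Omega>. strictly_convex_domain \<Omega> \<and> frontier \<Omega> = range \<gamma> \<and>
          (\<forall>z\<in>\<Omega>. winding_number \<gamma> z = 1)) \<and>
     (\<forall>x. \<gamma> (x + 1 / real n) = rotR n (\<gamma> x)) \<and>
     (\<forall>x. \<gamma> (- x) = reflS (\<gamma> x))"

definition Lfun :: "(real \<Rightarrow> complex) \<Rightarrow> real \<Rightarrow> real \<Rightarrow> real" where
  "Lfun \<gamma> x y = cmod (\<gamma> x - \<gamma> y)"

definition curvature :: "(real \<Rightarrow> complex) \<Rightarrow> (real \<Rightarrow> complex) \<Rightarrow> real \<Rightarrow> real" where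
  "curvature \<gamma>1 \<gamma>2 x = Im (cnj (\<gamma>1 x) * \<gamma>2 x) / cmod (\<gamma>1 x) ^ 3"

definition XX :: "int \<Rightarrow> real \<Rightarrow> (int \<Rightarrow> real) set" where
  "XX p q = {x. \<forall>i. x (i + p) = x i + q}"

text \<open>Billiard orbit Z with lift X: reflection law at every point (equal tangential
  components of incoming and outgoing unit directions).\<close>
definition billiard_orbit ::
  "(real \<Rightarrow> complex) \<Rightarrow> (real \<Rightarrow> complex) \<Rightarrow> (int \<Rightarrow> complex) \<Rightarrow> (int \<Rightarrow> real) \<Rightarrow> bool" where
  "billiard_orbit \<gamma> \<gamma>1 Z X \<longleftrightarrow>
     (\<forall>i. \<gamma> (X i) = Z i) \<and>
     (\<forall>i. 0 < X (i + 1) - X i \<and> X (i + 1) - X i < 1) \<and>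
     (\<forall>i. sgn (Z i - Z (i - 1)) \<bullet> \<gamma>1 (X i) = sgn (Z (i + 1) - Z i) \<bullet> \<gamma>1 (X i))"

definition Dn_symmetric_orbit :: "nat \<Rightarrow> (int \<Rightarrow> complex) \<Rightarrow> bool" where
  "Dn_symmetric_orbit n Z \<longleftrightarrow>
     (\<forall>g\<in>dihedral n. \<exists>k::int. (\<forall>i. g (Z i) = Z (k + i)) \<or> (\<forall>i. g (Z i) = Z (k - i)))"

definition birkhoff :: "(int \<Rightarrow> real) \<Rightarrow> bool" where
  "birkhoff X \<longleftrightarrow> (\<forall>i j l m :: int. X i \<le> X j + real_of_int l \<longrightarrow> X (i + m) \<le> X (j + m) + real_of_int l)"

text \<open>The generating function W_{p,q}, on vectors indexed by 1..p.\<close>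
definition Wpq :: "(real \<Rightarrow> complex) \<Rightarrow> nat \<Rightarrow> real \<Rightarrow> (nat \<Rightarrow> real) \<Rightarrow> real" where
  "Wpq \<gamma> p q x = (\<Sum>j = 1..p - 1. Lfun \<gamma> (x j) (x (j + 1))) + Lfun \<gamma> (x p) (x 1 + q)"

definition partial :: "((nat \<Rightarrow> real) \<Rightarrow> real) \<Rightarrow> nat \<Rightarrow> (nat \<Rightarrow> real) \<Rightarrow> real" where
  "partial f b y = deriv (\<lambda>t. f (y(b := t))) (y b)"

text \<open>Symmetric tridiagonal circulant p x p matrix (entries indexed 1..p): 2 alpha on the
  diagonal, beta at positions (a,b) with b = a+1 or b = a-1 modulo p (this includes the corners
  (1,p),(p,1); for p = 2 the two contributions add).\<close>
definition circ_matrix :: "nat \<Rightarrow> real \<Rightarrow> real \<Rightarrow> nat \<Rightarrow> nat \<Rightarrow> real" where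
  "circ_matrix p \<alpha> \<beta> a b =
     (if a = b then 2 * \<alpha> else 0)
     + (if (a + 1) mod p = b mod p then \<beta> else 0)
     + (if (b + 1) mod p = a mod p then \<beta> else 0)"

end

theory Submission
  imports Defs
begin


lemma circ_sum:
  fixes p :: nat and f :: "nat \<Rightarrow> real"
  assumes p2: "2 \<le> p" and a: "a \<in> {1..p}"
  shows "(\<Sum>b = 1..p. circ_matrix p al be a b * f b) = 2 * al * f a + be * f (if a = p then 1 else Suc a) + be * f (if a = 1 then p else a - 1)"
proof -
  have m1: "b \<in> {1..p} \<Longrightarrow> (a + 1) mod p = b mod p \<longleftrightarrow> b = (if a = p then 1 else Suc a)" for b
  proof -
    assume b: "b \<in> {1..p}"
    have bm: "b mod p = (if b = p then 0 else b)" using b by auto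
    show ?thesis
    proof (cases "a = p")
      case True
      have "(a + 1) mod p = 1" using True p2 by (simp add: mod_Suc)
      then show ?thesis using True b bm p2 by auto
    next
      case False
      then have "(a + 1) mod p = (if a + 1 = p then 0 else a + 1)" using a by auto
      then show ?thesis using False a b bm p2 by auto
    qed
  qed
  have m2: "b \<in> {1..p} \<Longrightarrow> (b + 1) mod p = a mod p \<longleftrightarrow> b = (if a = 1 then p else a - 1)" for b
  proof -
    assume b: "b \<in> {1..p}"
    have am: "a mod p = (if a = p then 0 else a)" using a by auto
    show ?thesis
    proof (cases "b = p")
      case True
      have "(b + 1) mod p = 1" using True p2 by (simp add: mod_Suc)
      then show ?thesis using True a am p2 by auto
    next
      case False
      then have "(b + 1) mod p = (if b + 1 = p then 0 else b + 1)" using b by auto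
      then show ?thesis using False a b am p2 by auto
    qed
  qed
  have "(\<Sum>b = 1..p. circ_matrix p al be a b * f b) = (\<Sum>b = 1..p. (if b = a then 2 * al * f a else 0)
     + (if b = (if a = p then 1 else Suc a) then be * f (if a = p then 1 else Suc a) else 0)
     + (if b = (if a = 1 then p else a - 1) then be * f (if a = 1 then p else a - 1) else 0))"
    by (rule sum.cong) (auto simp: circ_matrix_def m1 m2 distrib_right simp del: One_nat_def)
  also have "\<dots> = 2 * al * f a + be * f (if a = p then 1 else Suc a) + be * f (if a = 1 then p else a - 1)"
  proof -
    have i1: "(if a = p then 1 else Suc a) \<in> {1..p}" using a p2 by auto
    have i2: "(if a = 1 then p else a - 1) \<in> {1..p}" using a p2 by auto
    have dl: "\<And>c d. c \<in> {1..p} \<Longrightarrow> (\<Sum>b=1..p. if b = c then d else (0::real)) = d" by simp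
    show ?thesis unfolding sum.distrib dl[OF a] dl[OF i1] dl[OF i2] ..
  qed
  finally show ?thesis .
qed

lemma eig:
  fixes p :: nat and N :: int
  assumes p2: "2 \<le> p" and a: "a \<in> {1..p}"
  shows "(\<Sum>b = 1..p. circ_matrix p al be a b * sin (2 * pi * real_of_int N * real b / real p))
                = (2 * al + 2 * be * cos (2 * pi * real_of_int N / real p)) * sin (2 * pi * real_of_int N * real a / real p)
            \<and> (\<Sum>b = 1..p. circ_matrix p al be a b * cos (2 * pi * real_of_int N * real b / real p))
                = (2 * al + 2 * be * cos (2 * pi * real_of_int N / real p)) * cos (2 * pi * real_of_int N * real a / real p)"
proof -
  define x where "x = 2 * pi * real_of_int N * real a / real p"
  define h where "h = 2 * pi * real_of_int N / real p"
  have pp: "real p > 0" using p2 by simp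
  have e1: "2 * pi * real_of_int N * real (if a = p then 1 else Suc a) / real p = x + h - (if a = p then (2*pi) * of_int N else 0)"
    using pp by (auto simp: x_def h_def field_simps)
  have e2: "2 * pi * real_of_int N * real (if a = 1 then p else a - 1) / real p = x - h + (if a = 1 then (2*pi) * of_int N else 0)"
    using pp a by (auto simp: x_def h_def field_simps of_nat_diff)
  have s1: "sin (2 * pi * real_of_int N * real (if a = p then 1 else Suc a) / real p) = sin (x + h)"
    unfolding e1 by (simp add: sin_diff)
  have s2: "sin (2 * pi * real_of_int N * real (if a = 1 then p else a - 1) / real p) = sin (x - h)"
    unfolding e2 by (simp add: sin_add)
  have c1: "cos (2 * pi * real_of_int N * real (if a = p then 1 else Suc a) / real p) = cos (x + h)"
    unfolding e1 by (simp add: cos_diff)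
  have c2: "cos (2 * pi * real_of_int N * real (if a = 1 then p else a - 1) / real p) = cos (x - h)"
    unfolding e2 by (simp add: cos_add)
  show ?thesis
    unfolding circ_sum[OF p2 a, of al be "\<lambda>b. sin (2 * pi * real_of_int N * real b / real p)"]
      circ_sum[OF p2 a, of al be "\<lambda>b. cos (2 * pi * real_of_int N * real b / real p)"]
    unfolding s1 s2 c1 c2 x_def[symmetric] h_def[symmetric]
    by (simp add: sin_add sin_diff cos_add cos_diff algebra_simps)
qed

lemma inner_cx: "(a::complex) \<bullet> b = Re (cnj a * b)" by (simp add: inner_complex_def)

lemma cmod_1_cis: "sin ph > 0 \<Longrightarrow> cmod (1 - cis (2 * ph)) = 2 * sin ph"
proof -
  assume sp: "sin ph > 0"
  have "cmod (1 - cis (2 * ph)) ^ 2 = (1 - cos (2*ph))^2 + sin (2*ph)^2"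
    by (simp add: cmod_power2)
  also have "\<dots> = 4 * sin ph ^ 2 * (sin ph ^ 2 + cos ph ^ 2)"
    unfolding cos_double_sin sin_double by (simp add: power2_eq_square algebra_simps del: sin_cos_squared_add sin_cos_squared_add2 sin_cos_squared_add3)
  also have "\<dots> = (2 * sin ph)^2" by (simp add: power_mult_distrib)
  finally show ?thesis using sp
    by (metis norm_ge_zero power2_eq_imp_eq mult_nonneg_nonneg zero_le_numeral less_imp_le)
qed

lemma calc_ab:
  fixes z v ww om :: complex and c tau ka ph :: real
  assumes om: "om = cis (2 * ph)" and sp: "sin ph > 0"
    and A: "cnj z * v = \<i> * of_real tau" and tau: "tau = cmod z * c" and zr: "z \<noteq> 0"
    and B: "cnj z * ww = of_real (- ka * c * tau)" and cv: "cmod v = c"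
  shows "(v \<bullet> v + (z - om*z) \<bullet> ww) / cmod (z - om*z) - ((z - om*z) \<bullet> v)^2 / cmod (z - om*z)^3
          = c^2 * sin ph * (sin ph / cmod (om*z - z) - ka)"
    and "- (v \<bullet> (om * v)) / cmod (z - om*z) - ((z - om*z) \<bullet> v) * ((om*z - z) \<bullet> (om * v)) / cmod (z - om*z)^3
          = c^2 * sin ph ^ 2 / cmod (om*z - z)"
proof -
  define r where "r = cmod z"
  have rpos: "r > 0" using zr by (simp add: r_def)
  have omc: "cnj om * om = 1" using om by (simp add: cis_cnj cis_mult)
  have F1: "cmod (z - om*z) = 2 * sin ph * r"
  proof -
    have "z - om*z = (1 - om) * z" by (simp add: algebra_simps)
    then show ?thesis using cmod_1_cis[OF sp] om by (simp add: norm_mult r_def)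
  qed
  have F2: "cmod (om*z - z) = 2 * sin ph * r" using F1 by (simp add: norm_minus_commute)
  have i1: "(z - om*z) \<bullet> v = - tau * sin (2*ph)"
  proof -
    have "cnj (z - om*z) * v = (1 - cnj om) * (cnj z * v)" by (simp add: algebra_simps)
    also have "\<dots> = (1 - cnj om) * (\<i> * of_real tau)" by (simp only: A)
    finally have e: "cnj (z - om*z) * v = (1 - cnj om) * (\<i> * of_real tau)" .
    have "(z - om*z) \<bullet> v = Re ((1 - cnj om) * (\<i> * of_real tau))" by (simp only: inner_cx e)
    then show ?thesis by (simp add: om algebra_simps)
  qed
  have i2: "(z - om*z) \<bullet> ww = - ka * c * tau * (1 - cos (2*ph))"
  proof -
    have "cnj (z - om*z) * ww = (1 - cnj om) * (cnj z * ww)" by (simp add: algebra_simps)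
    also have "\<dots> = (1 - cnj om) * of_real (- ka * c * tau)" by (simp only: B)
    finally have e: "cnj (z - om*z) * ww = (1 - cnj om) * of_real (- ka * c * tau)" .
    have "(z - om*z) \<bullet> ww = Re ((1 - cnj om) * of_real (- ka * c * tau))" by (simp only: inner_cx e)
    then show ?thesis by (simp add: om algebra_simps)
  qed
  have i3: "v \<bullet> v = c^2" using cv by (simp add: power2_norm_eq_inner[symmetric])
  have i4: "(om*z - z) \<bullet> (om * v) = tau * sin (2*ph)"
  proof -
    have "cnj (om*z - z) * (om * v) = (cnj om * om - om) * (cnj z * v)" by (simp add: algebra_simps)
    also have "\<dots> = (1 - om) * (\<i> * of_real tau)" by (simp only: A omc)
    finally have e: "cnj (om*z - z) * (om * v) = (1 - om) * (\<i> * of_real tau)" .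
    have "(om*z - z) \<bullet> (om * v) = Re ((1 - om) * (\<i> * of_real tau))" by (simp only: inner_cx e)
    then show ?thesis by (simp add: om algebra_simps)
  qed
  have i5: "v \<bullet> (om * v) = c^2 * cos (2*ph)"
  proof -
    have vv: "v * cnj v = of_real (c^2)" using complex_norm_square[of v] cv by simp
    have "cnj v * (om * v) = om * (v * cnj v)" by (simp add: algebra_simps)
    also have "\<dots> = om * of_real (c^2)" by (simp only: vv)
    finally have e: "cnj v * (om * v) = om * of_real (c^2)" .
    have "v \<bullet> (om * v) = Re (om * of_real (c^2))" by (simp only: inner_cx e)
    then show ?thesis by (simp add: om)
  qed
  have t: "tau = r * c" using tau by (simp add: r_def)
  have co: "cos ph ^ 2 = 1 - sin ph ^ 2" by (rule cos_squared_eq)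
  have sp0: "sin ph \<noteq> 0" using sp by simp
  show "(v \<bullet> v + (z - om*z) \<bullet> ww) / cmod (z - om*z) - ((z - om*z) \<bullet> v)^2 / cmod (z - om*z)^3
          = c^2 * sin ph * (sin ph / cmod (om*z - z) - ka)"
    unfolding i1 i2 i3 F1 F2 t cos_double_sin sin_double
    using rpos sp0 apply (simp add: field_simps power2_eq_square power3_eq_cube)
    using co by algebra
  show "- (v \<bullet> (om * v)) / cmod (z - om*z) - ((z - om*z) \<bullet> v) * ((om*z - z) \<bullet> (om * v)) / cmod (z - om*z)^3
          = c^2 * sin ph ^ 2 / cmod (om*z - z)"
    unfolding i1 i4 i5 F1 F2 t cos_double_sin sin_double
    using rpos sp0 apply (simp add: field_simps power2_eq_square power3_eq_cube)
    using co by algebra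
qed

locale curv =
  fixes g g1 g2 :: "real \<Rightarrow> complex"
  assumes d1: "\<And>x. (g has_vector_derivative g1 x) (at x)"
      and d2: "\<And>x. (g1 has_vector_derivative g2 x) (at x)"
begin

definition "gR x = Re (g x)"
definition "gI x = Im (g x)"
definition "hR x = Re (g1 x)"
definition "hI x = Im (g1 x)"
definition "kR x = Re (g2 x)"
definition "kI x = Im (g2 x)"

lemma dgR: "(gR has_real_derivative hR x) (at x)"
  unfolding gR_def hR_def by (rule has_field_derivative_Re[OF d1])
lemma dgI: "(gI has_real_derivative hI x) (at x)"
  unfolding gI_def hI_def by (rule has_field_derivative_Im[OF d1])
lemma dhR: "(hR has_real_derivative kR x) (at x)"
  unfolding kR_def hR_def by (rule has_field_derivative_Re[OF d2])
lemma dhI: "(hI has_real_derivative kI x) (at x)"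
  unfolding kI_def hI_def by (rule has_field_derivative_Im[OF d2])

lemma aff: assumes "(f has_real_derivative f' (c + k*t)) (at (c + k*t))"
   shows "((\<lambda>t. f (c + k*t)) has_real_derivative k * f' (c + k*t)) (at t)"
proof -
  have "((\<lambda>t. c + k*t) has_real_derivative k) (at t)" by (auto intro!: derivative_eq_intros)
  from DERIV_chain2[OF assms this] show ?thesis by (simp add: mult.commute)
qed

lemmas affs = aff[of gR hR, OF dgR] aff[of gI hI, OF dgI] aff[of hR kR, OF dhR] aff[of hI kI, OF dhI]

definition "LL x y = sqrt ((gR x - gR y)^2 + (gI x - gI y)^2)"

lemma LL_eq: "Lfun g x y = LL x y"
  by (simp add: Lfun_def LL_def gR_def gI_def norm_complex_def)

lemma LL_pos: "g x \<noteq> g y \<Longrightarrow> LL x y > 0"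
  unfolding LL_eq[symmetric] Lfun_def by simp

definition "N1 x y = (gR x - gR y) * hR x + (gI x - gI y) * hI x"
definition "N2 x y = (gR y - gR x) * hR y + (gI y - gI x) * hI y"
definition "D1 x y = N1 x y / LL x y"
definition "D2 x y = N2 x y / LL x y"
definition "D11 x y = (hR x ^ 2 + hI x ^ 2 + (gR x - gR y) * kR x + (gI x - gI y) * kI x) / LL x y
    - N1 x y ^ 2 / LL x y ^ 3"
definition "D22 x y = (hR y ^ 2 + hI y ^ 2 + (gR y - gR x) * kR y + (gI y - gI x) * kI y) / LL x y
    - N2 x y ^ 2 / LL x y ^ 3"
definition "D12 x y = - (hR x * hR y + hI x * hI y) / LL x y - N1 x y * N2 x y / LL x y ^ 3"

lemma LA:
  assumes "g (ca + la* s) \<noteq> g (cb + lb* s)"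
  shows "((\<lambda>s. Lfun g (ca + la* s) (cb + lb* s)) has_real_derivative
          (la * D1 (ca + la* s) (cb + lb* s) + lb * D2 (ca + la* s) (cb + lb* s))) (at s)"
proof -
  let ?u = "ca + la* s" and ?w = "cb + lb* s"
  have p: "LL ?u ?w > 0" using LL_pos[OF assms] .
  have q: "(gR ?u - gR ?w)^2 + (gI ?u - gI ?w)^2 > 0" using p unfolding LL_def by simp
  have e: "((\<lambda>s. (gR (ca + la* s) - gR (cb + lb* s))^2 + (gI (ca + la* s) - gI (cb + lb* s))^2) has_real_derivative
     (2*(gR ?u - gR ?w)*(la*hR ?u - lb*hR ?w) + 2*(gI ?u - gI ?w)*(la*hI ?u - lb*hI ?w))) (at s)"
    apply (rule derivative_eq_intros affs refl)+
    by (simp add: algebra_simps)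
  have "((\<lambda>s. sqrt ((gR (ca + la* s) - gR (cb + lb* s))^2 + (gI (ca + la* s) - gI (cb + lb* s))^2)) has_real_derivative
     (inverse (LL ?u ?w) / 2) * (2*(gR ?u - gR ?w)*(la*hR ?u - lb*hR ?w) + 2*(gI ?u - gI ?w)*(la*hI ?u - lb*hI ?w))) (at s)"
    using DERIV_chain2[OF DERIV_real_sqrt[OF q] e] by (simp add: LL_def)
  then show ?thesis unfolding LL_eq LL_def[symmetric] D1_def D2_def N1_def N2_def
    apply (rule DERIV_cong)
    using p by (simp add: field_simps)
qed

lemma dLL:
  assumes "g (ca + ka* t) \<noteq> g (cb + kb* t)"
  shows "((\<lambda>t. LL (ca + ka* t) (cb + kb* t)) has_real_derivative
          (ka * D1 (ca + ka* t) (cb + kb* t) + kb * D2 (ca + ka* t) (cb + kb* t))) (at t)"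
  using LA[OF assms] by (simp add: LL_eq)

lemma dN1: "((\<lambda>t. N1 (ca + ka* t) (cb + kb* t)) has_real_derivative
   ((ka*hR (ca + ka* t) - kb*hR (cb + kb* t)) * hR (ca + ka* t) + (gR (ca + ka* t) - gR (cb + kb* t)) * (ka * kR (ca + ka* t))
   + (ka*hI (ca + ka* t) - kb*hI (cb + kb* t)) * hI (ca + ka* t) + (gI (ca + ka* t) - gI (cb + kb* t)) * (ka * kI (ca + ka* t)))) (at t)"
  unfolding N1_def
  apply (rule derivative_eq_intros affs refl)+
  by (simp add: algebra_simps)

lemma dN2: "((\<lambda>t. N2 (ca + ka* t) (cb + kb* t)) has_real_derivative
   ((kb*hR (cb + kb* t) - ka*hR (ca + ka* t)) * hR (cb + kb* t) + (gR (cb + kb* t) - gR (ca + ka* t)) * (kb * kR (cb + kb* t))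
   + (kb*hI (cb + kb* t) - ka*hI (ca + ka* t)) * hI (cb + kb* t) + (gI (cb + kb* t) - gI (ca + ka* t)) * (kb * kI (cb + kb* t)))) (at t)"
  unfolding N2_def
  apply (rule derivative_eq_intros affs refl)+
  by (simp add: algebra_simps)

lemma LB:
  assumes "g (ca + ka* t) \<noteq> g (cb + kb* t)"
  shows "((\<lambda>t. la * D1 (ca + ka* t) (cb + kb* t) + lb * D2 (ca + ka* t) (cb + kb* t)) has_real_derivative
     (la * (ka * D11 (ca + ka* t) (cb + kb* t) + kb * D12 (ca + ka* t) (cb + kb* t))
    + lb * (ka * D12 (ca + ka* t) (cb + kb* t) + kb * D22 (ca + ka* t) (cb + kb* t)))) (at t)"
proof -
  have p: "LL (ca + ka* t) (cb + kb* t) > 0" using LL_pos[OF assms] .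
  have sq: "LL (ca + ka* t) (cb + kb* t) ^ 2 = (gR (ca + ka* t) - gR (cb + kb* t))^2 + (gI (ca + ka* t) - gI (cb + kb* t))^2"
    unfolding LL_def by simp
  have ne: "LL (ca + ka* t) (cb + kb* t) \<noteq> 0" using p by simp
  note a = DERIV_divide[OF dN1 dLL[OF assms] ne]
  note b = DERIV_divide[OF dN2 dLL[OF assms] ne]
  note c = DERIV_add[OF DERIV_cmult[OF a, of la] DERIV_cmult[OF b, of lb]]
  show ?thesis unfolding D1_def D2_def
    apply (rule DERIV_cong[OF c])
    using p unfolding D1_def D2_def D11_def D22_def D12_def
    by (simp add: field_simps power2_eq_square power3_eq_cube)
qed

lemma vd_aff:
  assumes "(f has_vector_derivative f' (a + k*x)) (at (a + k*x))"
  shows "((\<lambda>x. f (a + k*x)) has_vector_derivative k *\<^sub>R f' (a + k*x)) (at x)"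
proof -
  have "((\<lambda>x. a + k*x) has_vector_derivative k) (at x)"
    using has_real_derivative_iff_has_vector_derivative[THEN iffD1, of "\<lambda>x. a + k*x" k]
    by (auto intro!: derivative_eq_intros)
  from vector_diff_chain_at[OF this assms] show ?thesis by (simp add: o_def)
qed

lemma transfer1:
  fixes f f' :: "real \<Rightarrow> complex"
  assumes "\<And>x. (f has_vector_derivative f' x) (at x)" "\<And>x. f (a + k*x) = w * f x"
  shows "k *\<^sub>R f' (a + k*x) = w * f' x"
proof -
  have "((\<lambda>x. f (a + k*x)) has_vector_derivative k *\<^sub>R f' (a + k*x)) (at x)"
    by (rule vd_aff[of f f' a k x, OF assms(1)])
  moreover have "((\<lambda>x. f (a + k*x)) has_vector_derivative w * f' x) (at x)"
    unfolding assms(2) by (rule has_vector_derivative_mult_right[OF assms(1)])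
  ultimately show ?thesis by (rule vector_derivative_unique_at)
qed

lemma transfer2:
  fixes f f' :: "real \<Rightarrow> complex"
  assumes "\<And>x. (f has_vector_derivative f' x) (at x)" "\<And>x. f (a + k*x) = w * cnj (f x)"
  shows "k *\<^sub>R f' (a + k*x) = w * cnj (f' x)"
proof -
  have "((\<lambda>x. f (a + k*x)) has_vector_derivative k *\<^sub>R f' (a + k*x)) (at x)"
    by (rule vd_aff[of f f' a k x, OF assms(1)])
  moreover have "((\<lambda>x. f (a + k*x)) has_vector_derivative w * cnj (f' x)) (at x)"
    unfolding assms(2) by (rule has_vector_derivative_mult_right[OF has_vector_derivative_cnj[OF assms(1)]])
  ultimately show ?thesis by (rule vector_derivative_unique_at)
qed

lemma inner_rot:
  fixes w a b :: complex
  assumes "cmod w = 1"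
  shows "(w * a) \<bullet> (w * b) = a \<bullet> b"
proof -
  have e: "\<And>a b::complex. a \<bullet> b = Re (cnj a * b)" by (simp add: inner_complex_def)
  have "cnj (w*a) * (w*b) = (w * cnj w) * (cnj a * b)" by (simp add: algebra_simps)
  also have "w * cnj w = 1" using complex_norm_square[of w] assms by simp
  finally have "cnj (w*a) * (w*b) = cnj a * b" by simp
  then show ?thesis by (simp only: e)
qed

lemma inner_cnj: "(cnj a) \<bullet> (cnj b) = a \<bullet> b"
  by (simp add: inner_complex_def)

lemma D11_cx: "D11 x y = (g1 x \<bullet> g1 x + (g x - g y) \<bullet> g2 x) / cmod (g x - g y) - ((g x - g y) \<bullet> g1 x)^2 / cmod (g x - g y)^3"
  unfolding D11_def N1_def LL_eq[symmetric, unfolded Lfun_def] by (simp add: inner_complex_def gR_def gI_def hR_def hI_def kR_def kI_def power2_eq_square)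
lemma D22_cx: "D22 x y = (g1 y \<bullet> g1 y + (g y - g x) \<bullet> g2 y) / cmod (g x - g y) - ((g y - g x) \<bullet> g1 y)^2 / cmod (g x - g y)^3"
  unfolding D22_def N2_def LL_eq[symmetric, unfolded Lfun_def] by (simp add: inner_complex_def gR_def gI_def hR_def hI_def kR_def kI_def power2_eq_square)
lemma D12_cx: "D12 x y = - (g1 x \<bullet> g1 y) / cmod (g x - g y) - ((g x - g y) \<bullet> g1 x) * ((g y - g x) \<bullet> g1 y) / cmod (g x - g y)^3"
  unfolding D12_def N1_def N2_def LL_eq[symmetric, unfolded Lfun_def] by (simp add: inner_complex_def gR_def gI_def hR_def hI_def kR_def kI_def)
lemma D1_cx: "D1 x y = ((g x - g y) \<bullet> g1 x) / cmod (g x - g y)"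
  unfolding D1_def N1_def LL_eq[symmetric, unfolded Lfun_def] by (simp add: inner_complex_def gR_def gI_def hR_def hI_def)
lemma D2_cx: "D2 x y = ((g y - g x) \<bullet> g1 y) / cmod (g x - g y)"
  unfolding D2_def N2_def LL_eq[symmetric, unfolded Lfun_def] by (simp add: inner_complex_def gR_def gI_def hR_def hI_def)

lemma LAt:
  assumes "g (ca + la * s + ka*t) \<noteq> g (cb + lb * s + kb*t)"
  shows "((\<lambda>s. Lfun g (ca + la * s + ka*t) (cb + lb * s + kb*t)) has_real_derivative
          (la * D1 (ca + la * s + ka*t) (cb + lb * s + kb*t) + lb * D2 (ca + la * s + ka*t) (cb + lb * s + kb*t))) (at s)"
proof -
  have e: "\<And>c l k. c + l * s + k*t = (c + k*t) + l * s" "\<And>c l k s. c + l * s + k*t = (c + k*t) + l * s" by simp_all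
  show ?thesis unfolding e(2) using LA[where ca="ca + ka*t" and cb="cb + kb*t" and la=la and lb=lb and s=s] assms
    unfolding e(1) by simp
qed

lemma LBt:
  assumes "g (ca + la * s + ka*t) \<noteq> g (cb + lb * s + kb*t)"
  shows "((\<lambda>t. la * D1 (ca + la * s + ka*t) (cb + lb * s + kb*t) + lb * D2 (ca + la * s + ka*t) (cb + lb * s + kb*t)) has_real_derivative
     (la * (ka * D11 (ca + la * s + ka*t) (cb + lb * s + kb*t) + kb * D12 (ca + la * s + ka*t) (cb + lb * s + kb*t))
    + lb * (ka * D12 (ca + la * s + ka*t) (cb + lb * s + kb*t) + kb * D22 (ca + la * s + ka*t) (cb + lb * s + kb*t)))) (at t)"
  using LB[where ca="ca + la * s" and cb="cb + lb * s" and ka=ka and kb=kb and t=t and la=la and lb=lb] assms by simp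

lemma LA1: "g a \<noteq> g t \<Longrightarrow> ((\<lambda>u. Lfun g a u) has_real_derivative D2 a t) (at t)"
  using LA[where ca=a and la=0 and cb=0 and lb=1 and s=t] by simp
lemma LA2: "g t \<noteq> g b \<Longrightarrow> ((\<lambda>u. Lfun g u b) has_real_derivative D1 t b) (at t)"
  using LA[where ca=0 and la=1 and cb=b and lb=0 and s=t] by simp
lemma LB2: "g a \<noteq> g t \<Longrightarrow> ((\<lambda>t. D2 a t) has_real_derivative D22 a t) (at t)"
  using LB[where ca=a and ka=0 and cb=0 and kb=1 and t=t and la=0 and lb=1] by simp
lemma LB1: "g t \<noteq> g b \<Longrightarrow> ((\<lambda>t. D1 t b) has_real_derivative D11 t b) (at t)"
  using LB[where ca=0 and ka=1 and cb=b and kb=0 and t=t and la=1 and lb=0] by simp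
lemma LB12: "g a \<noteq> g t \<Longrightarrow> ((\<lambda>t. D1 a t) has_real_derivative D12 a t) (at t)"
  using LB[where ca=a and ka=0 and cb=0 and kb=1 and t=t and la=1 and lb=0] by simp

lemma g_cont: "continuous_on UNIV g"
  by (rule continuous_on_vector_derivative) (use d1 in auto)
lemma g1_cont: "continuous_on UNIV g1"
  by (rule continuous_on_vector_derivative) (use d2 in auto)
lemma open_neq: "open {t. g (ca + ka * t) \<noteq> g (cb + kb * t)}"
  by (rule open_Collect_neq; intro continuous_on_compose2[OF g_cont] continuous_intros; simp)

end

locale symc = curv +
  fixes n :: nat
  assumes n2: "2 \<le> n"
    and per: "\<And>x y. g x = g y \<longleftrightarrow> (\<exists>k::int. x - y = of_int k)"
    and rot: "\<And>x. g (x + 1/real n) = rotR n (g x)"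
    and rfl: "\<And>x. g (-x) = reflS (g x)"
begin

definition "w (j::int) = cis (2 * pi * of_int j / real n)"

lemma w_norm[simp]: "cmod (w j) = 1" by (simp add: w_def)

lemma rot_nat: "g (x + real k / real n) = w (int k) * g x"
proof (induction k arbitrary: x)
  case 0 then show ?case by (simp add: w_def)
next
  case (Suc k)
  have "x + real (Suc k) / real n = (x + real k / real n) + 1 / real n"
    by (simp add: add_divide_distrib)
  then have "g (x + real (Suc k) / real n) = cis (2 * pi / real n) * (w (int k) * g x)"
    by (simp only: rot rotR_def Suc.IH)
  also have "cis (2 * pi / real n) * (w (int k) * g x) = (cis (2 * pi / real n) * w (int k)) * g x"
    by (simp only: mult.assoc)
  also have "cis (2 * pi / real n) * w (int k) = w (int (Suc k))"
    unfolding w_def cis_mult by (simp add: add_divide_distrib distrib_left)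
  finally show ?case .
qed

lemma rotj: "g (x + of_int j / real n) = w j * g x"
proof (cases "j \<ge> 0")
  case True
  then obtain k where "j = int k" by (metis nonneg_int_cases)
  then show ?thesis using rot_nat by simp
next
  case False
  define k where "k = nat (-j)"
  have k: "j = - int k" using False by (simp add: k_def)
  have "g x = g ((x + of_int j / real n) + real k / real n)" by (simp add: k)
  also have "\<dots> = w (int k) * g (x + of_int j / real n)" by (rule rot_nat)
  finally have "w j * g x = (w j * w (int k)) * g (x + of_int j / real n)" by simp
  also have "w j * w (int k) = 1" by (simp add: w_def k cis_mult)
  finally show ?thesis by simp
qed

lemma rot1: "g1 (x + of_int j / real n) = w j * g1 x"
  using transfer1[OF d1, of "of_int j / real n" 1 "w j" x] rotj by (simp add: add.commute)
lemma rot2: "g2 (x + of_int j / real n) = w j * g2 x"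
  using transfer1[OF d2, of "of_int j / real n" 1 "w j" x] rot1 by (simp add: add.commute)

lemma refl0: "g (of_int j / real n - x) = w j * cnj (g x)"
  using rotj[of "-x" j] rfl[of x] by (simp add: reflS_def)
lemma refl1: "g1 (of_int j / real n - x) = - (w j * cnj (g1 x))"
proof -
  have "(-1) *\<^sub>R g1 (of_int j / real n + (-1)*x) = w j * cnj (g1 x)"
    using transfer2[OF d1, of "of_int j / real n" "-1" "w j" x] refl0 by simp
  then show ?thesis by (simp add: equation_minus_iff)
qed
lemma refl2: "g2 (of_int j / real n - x) = w j * cnj (g2 x)"
proof -
  have "(-1) *\<^sub>R g2 (of_int j / real n + (-1)*x) = (- w j) * cnj (g2 x)"
    using transfer2[OF d2, of "of_int j / real n" "-1" "- w j" x] refl1 by simp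
  then show ?thesis by simp
qed

lemma shift_diff: "g (x + of_int j / real n) - g (y + of_int j / real n) = w j * (g x - g y)"
  by (simp add: rotj algebra_simps)
lemma shift_cm: "cmod (g (x + of_int j / real n) - g (y + of_int j / real n)) = cmod (g x - g y)"
  by (simp add: shift_diff norm_mult)

lemma D11_shift: "D11 (x + of_int j / real n) (y + of_int j / real n) = D11 x y"
  unfolding D11_cx shift_diff rot1 rot2 inner_rot[OF w_norm] norm_mult w_norm mult_1 ..
lemma D22_shift: "D22 (x + of_int j / real n) (y + of_int j / real n) = D22 x y"
  unfolding D22_cx shift_diff rot1 rot2 inner_rot[OF w_norm] norm_mult w_norm mult_1 ..
lemma D12_shift: "D12 (x + of_int j / real n) (y + of_int j / real n) = D12 x y"
  unfolding D12_cx shift_diff rot1 rot2 inner_rot[OF w_norm] norm_mult w_norm mult_1 ..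

lemma D_rev: "D22 (of_int j / real n - y) (of_int j / real n - x) = D11 x y"
proof -
  have a: "g (of_int j / real n - x) - g (of_int j / real n - y) = w j * cnj (g x - g y)"
    by (simp add: refl0 algebra_simps)
  have b: "cmod (g (of_int j / real n - y) - g (of_int j / real n - x)) = cmod (g x - g y)"
    by (simp add: refl0 norm_mult norm_minus_commute flip: right_diff_distrib complex_cnj_diff)
  show ?thesis unfolding D22_cx D11_cx a b refl1 refl2 inner_minus_left inner_minus_right inner_rot[OF w_norm] inner_cnj
    by simp
qed


lemma Xper_nat:
  assumes "X \<in> XX (int n) (real m)"
  shows "X (i + int n * int t) = X i + real t * real m"
proof (induction t)
  case 0 then show ?case by simp
next
  case (Suc t)
  have "X (i + int n * int (Suc t)) = X ((i + int n * int t) + int n)" by (simp add: algebra_simps)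
  also have "\<dots> = X (i + int n * int t) + real m" using assms by (simp add: XX_def)
  finally show ?case using Suc by (simp add: algebra_simps)
qed

lemma Xper:
  assumes "X \<in> XX (int n) (real m)"
  shows "X (i + int n * t) = X i + of_int t * real m"
proof (cases "t \<ge> 0")
  case True
  then obtain k where "t = int k" by (metis nonneg_int_cases)
  then show ?thesis using Xper_nat[OF assms] by simp
next
  case False
  define k where "k = nat (-t)"
  have k: "t = - int k" using False by (simp add: k_def)
  have "X ((i + int n * t) + int n * int k) = X (i + int n * t) + real k * real m" by (rule Xper_nat[OF assms])
  then show ?thesis by (simp add: k algebra_simps)
qed

lemma g_eq_int: "g x = g y \<Longrightarrow> \<exists>k::int. x - y = of_int k" using per by blast

lemma orbit_structure:
  assumes cop: "coprime m n" and m1: "1 \<le> m" and mn: "m \<le> n - 1"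
    and gz: "\<And>i. g (X i) = Z i"
    and sym: "Dn_symmetric_orbit n Z"
    and bir: "birkhoff X"
    and xx: "X \<in> XX (int n) (real m)"
  shows "(\<forall>i. X i = X 0 + of_int i * real m / real n) \<and> (\<exists>J::int. 2 * X 0 + real m / real n = of_int J / real n)"
proof -
  have npos: "real n > 0" using n2 by simp
  have Zper: "Z (i + int n * t) = Z i" for i t
  proof -
    have "g (X (i + int n * t)) = g (X i + of_int (t * int m))" using Xper[OF xx] by simp
    also have "\<dots> = g (X i)" by (subst per) (rule exI[of _ "t * int m"], simp)
    finally show ?thesis using gz by simp
  qed
  have Rg: "rotR n (g x) = g (x + 1 / real n)" for x using rot by simp
  have Rdih: "rotR n \<in> dihedral n"
    unfolding dihedral_def by (rule UnI1, rule CollectI, rule exI[of _ 1]) (auto simp: rotR_def fun_eq_iff)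
  obtain k where kcase: "(\<forall>i. rotR n (Z i) = Z (k + i)) \<or> (\<forall>i. rotR n (Z i) = Z (k - i))"
    using sym Rdih unfolding Dn_symmetric_orbit_def by blast
  have Rk: "\<forall>i. rotR n (Z i) = Z (k + i)"
  proof (cases "\<forall>i. rotR n (Z i) = Z (k - i)")
    case False then show ?thesis using kcase by blast
  next
    case True
    have "g (X 0 + 2 / real n) = g (X 0)"
    proof -
      have "g (X 0 + 2 / real n) = rotR n (rotR n (g (X 0)))"
        using Rg[of "X 0"] Rg[of "X 0 + 1 / real n"] by (simp add: add_divide_distrib[symmetric] algebra_simps)
      also have "\<dots> = rotR n (rotR n (Z 0))" using gz by simp
      also have "\<dots> = rotR n (Z k)" using True by (metis diff_zero)
      also have "\<dots> = Z 0" using True by (metis cancel_comm_monoid_add_class.diff_cancel)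
      finally show ?thesis using gz by simp
    qed
    then obtain l :: int where l: "X 0 + 2 / real n - X 0 = of_int l" using per by blast
    have n2': "n = 2"
    proof (rule ccontr)
      assume "n \<noteq> 2"
      then have "real n \<ge> 3" using n2 by simp
      then have "0 < 2 / real n" "2 / real n < 1" by (auto simp: field_simps)
      moreover from l have "2 / real n = of_int l" by simp
      ultimately have "0 < l" "l < 1" by simp_all
      then show False by simp
    qed
    show ?thesis
    proof
      fix i
      have "Z (k - i) = Z ((k + i) + int n * (- i))" by (simp add: n2' algebra_simps del: mult_minus_right)
      also have "\<dots> = Z (k + i)" by (rule Zper)
      finally show "rotR n (Z i) = Z (k + i)" using True by simp
    qed
  qed
  have lex: "\<exists>l::int. X (k + i) = X i + 1 / real n + of_int l" for i
  proof -
    have "g (X (k + i)) = rotR n (Z i)" using Rk gz by simp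
    also have "\<dots> = g (X i + 1 / real n)" using gz[of i] Rg[of "X i"] by simp
    finally have "g (X (k + i)) = g (X i + 1 / real n)" .
    then obtain l :: int where "X (k + i) - (X i + 1 / real n) = of_int l" using per by blast
    then show ?thesis by (intro exI[of _ l]) simp
  qed
  obtain l0 :: int where l0: "X k = X 0 + 1 / real n + of_int l0" using lex[of 0] by auto
  have inv: "0 < 1 / real n" "1 / real n < 1" using n2 by (auto simp: field_simps)
  have kstep: "X (k + i) = X i + 1 / real n + of_int l0" for i
  proof -
    obtain li :: int where li: "X (k + i) = X i + 1 / real n + of_int li" using lex by blast
    have "X k \<le> X 0 + real_of_int (l0 + 1)" using l0 inv by simp
    then have "X (k + i) \<le> X (0 + i) + real_of_int (l0 + 1)" using bir unfolding birkhoff_def by blast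
    then have "X (k + i) \<le> X i + real_of_int (l0 + 1)" by simp
    then have "of_int li < real_of_int (l0 + 1)" using li inv by linarith
    then have a: "li \<le> l0" by linarith
    have "X 0 \<le> X k + real_of_int (- l0)" using l0 inv by simp
    then have "X (0 + i) \<le> X (k + i) + real_of_int (- l0)" using bir unfolding birkhoff_def by blast
    then have "X i \<le> X (k + i) + real_of_int (- l0)" by simp
    then have "real_of_int (- 1) < of_int li - of_int l0" using li inv by linarith
    then have "l0 \<le> li" by linarith
    with a have "li = l0" by simp
    then show ?thesis using li by simp
  qed
  have iter: "X (int t * k + i) = X i + real t / real n + real t * of_int l0" for t i
  proof (induction t)
    case 0 then show ?case by simp
  next
    case (Suc t)
    have "X (int (Suc t) * k + i) = X (k + (int t * k + i))" by (simp add: algebra_simps)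
    also have "\<dots> = X (int t * k + i) + 1 / real n + of_int l0" by (rule kstep)
    finally show ?case using Suc by (simp add: add_divide_distrib algebra_simps)
  qed
  have "X (int n * k + 0) = X 0 + 1 + real n * of_int l0" using iter[of n 0] npos by simp
  moreover have "X (0 + int n * k) = X 0 + of_int k * real m" by (rule Xper[OF xx])
  ultimately have "of_int k * real m = 1 + real n * of_int l0" by (simp add: add.commute)
  then have "of_int (k * int m) = (of_int (1 + int n * l0) :: real)" by simp
  then have km: "k * int m = 1 + int n * l0" by (simp only: of_int_eq_iff)
  have step: "X (i + 1) = X i + real m / real n" for i
  proof -
    have "X (int m * k + i) = X i + real m / real n + real m * of_int l0" by (rule iter)
    also have "int m * k + i = (i + 1) + int n * l0" using km by (simp add: algebra_simps)
    finally have "X ((i + 1) + int n * l0) = X i + real m / real n + real m * of_int l0" .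
    moreover have "X ((i + 1) + int n * l0) = X (i + 1) + of_int l0 * real m" by (rule Xper[OF xx])
    ultimately show ?thesis by (simp add: algebra_simps)
  qed
  have lin: "X i = X 0 + of_int i * real m / real n" for i
  proof (induction i rule: int_induct[where k=0])
    case base then show ?case by simp
  next
    case (step1 i) then show ?case using step[of i] by (simp add: add_divide_distrib algebra_simps)
  next
    case (step2 i) then show ?case using step[of "i - 1"] by (simp add: diff_divide_distrib algebra_simps)
  qed
  have Sdih: "reflS \<in> dihedral n"
    unfolding dihedral_def by (rule UnI2, rule CollectI, rule exI[of _ 0]) (auto simp: reflS_def fun_eq_iff)
  obtain k' where "(\<forall>i. reflS (Z i) = Z (k' + i)) \<or> (\<forall>i. reflS (Z i) = Z (k' - i))"
    using sym Sdih unfolding Dn_symmetric_orbit_def by blast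
  then have "reflS (Z 0) = Z k'" by auto
  then have "g (- X 0) = g (X k')" using rfl gz by simp
  then obtain l' :: int where l': "- X 0 - X k' = of_int l'" using per by blast
  have "2 * X 0 + real m / real n = of_int (int m - k' * int m - l' * int n) / real n"
    using l' lin[of k'] npos by (simp add: field_simps)
  then show ?thesis using lin by blast
qed

end

locale orb = symc +
  fixes X :: "int \<Rightarrow> real" and m :: nat and J :: int
  assumes lin: "\<And>i. X i = X 0 + of_int i * real m / real n"
    and Jdef: "2 * X 0 + real m / real n = of_int J / real n"
    and m1: "1 \<le> m" and mn: "m \<le> n - 1"
begin

definition "alpha = D11 (X 0) (X 1)"
definition "beta = D12 (X 0) (X 1)"

lemma mpos: "0 < real m / real n" "real m / real n < 1"
  using m1 mn n2 by (auto simp: field_simps)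

lemma X_shift0: "X i = X 0 + of_int (i * int m) / real n"
  using lin[of i] by simp
lemma X_shift1: "X (i + 1) = X 1 + of_int (i * int m) / real n"
  using lin[of "i+1"] lin[of 1] by (simp add: add_divide_distrib distrib_right)

lemma X_step: "X (i + 1) = X i + real m / real n"
  using lin[of "i+1"] lin[of i] by (simp add: add_divide_distrib distrib_right)

lemma neq: "g (X i) \<noteq> g (X (i + 1))"
proof
  assume "g (X i) = g (X (i + 1))"
  then obtain k :: int where "X i - X (i + 1) = of_int k" using per by blast
  then have "of_int k = - (real m / real n)" using X_step[of i] by simp
  then have "-1 < k" "k < 0" using mpos by linarith+
  then show False by simp
qed

lemma D11_i: "D11 (X i) (X (i + 1)) = alpha"
  unfolding alpha_def X_shift1 by (subst X_shift0) (rule D11_shift)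
lemma D12_i: "D12 (X i) (X (i + 1)) = beta"
  unfolding beta_def X_shift1 by (subst X_shift0) (rule D12_shift)
lemma D22_0: "D22 (X 0) (X 1) = alpha"
proof -
  have "X 0 = of_int J / real n - X 1" "X 1 = of_int J / real n - X 0"
    using Jdef X_step[of 0] by simp_all
  then have "D22 (X 0) (X 1) = D22 (of_int J / real n - X 1) (of_int J / real n - X 0)" by simp
  also have "\<dots> = alpha" unfolding alpha_def by (rule D_rev)
  finally show ?thesis .
qed
lemma D22_i: "D22 (X i) (X (i + 1)) = alpha"
  unfolding D22_0[symmetric] X_shift1 by (subst X_shift0) (rule D22_shift)

lemma open_neq1: "open {t. g a \<noteq> g t}"
  using open_neq[where ca=a and ka=0 and cb=0 and kb=1] by simp
lemma open_neq2: "open {t. g t \<noteq> g b}"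
  using open_neq[where ca=0 and ka=1 and cb=b and kb=0] by simp

lemma conj1a: "((\<lambda>t. deriv (\<lambda>u. Lfun g (X (i - 1)) u) t) has_real_derivative alpha) (at (X i))"
proof -
  have ne: "g (X (i - 1)) \<noteq> g (X i)" using neq[of "i - 1"] by simp
  have "((\<lambda>t. D2 (X (i - 1)) t) has_real_derivative D22 (X (i - 1)) (X i)) (at (X i))" by (rule LB2[OF ne])
  moreover have "D22 (X (i - 1)) (X i) = alpha" using D22_i[of "i - 1"] by simp
  ultimately have "((\<lambda>t. D2 (X (i - 1)) t) has_real_derivative alpha) (at (X i))" by simp
  then show ?thesis
    by (rule has_field_derivative_transform_within_open[OF _ open_neq1]) (use ne DERIV_imp_deriv[OF LA1] in auto)
qed

lemma conj1b: "((\<lambda>t. deriv (\<lambda>u. Lfun g u (X (i + 1))) t) has_real_derivative alpha) (at (X i))"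
proof -
  have ne: "g (X i) \<noteq> g (X (i + 1))" by (rule neq)
  have "((\<lambda>t. D1 t (X (i + 1))) has_real_derivative D11 (X i) (X (i + 1))) (at (X i))" by (rule LB1[OF ne])
  then have "((\<lambda>t. D1 t (X (i + 1))) has_real_derivative alpha) (at (X i))" using D11_i by simp
  then show ?thesis
    by (rule has_field_derivative_transform_within_open[OF _ open_neq2]) (use ne DERIV_imp_deriv[OF LA2] in auto)
qed

lemma conj1c: "((\<lambda>t. deriv (\<lambda>u. Lfun g u t) (X i)) has_real_derivative beta) (at (X (i + 1)))"
proof -
  have ne: "g (X i) \<noteq> g (X (i + 1))" by (rule neq)
  have "((\<lambda>t. D1 (X i) t) has_real_derivative D12 (X i) (X (i + 1))) (at (X (i + 1)))" by (rule LB12[OF ne])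
  then have "((\<lambda>t. D1 (X i) t) has_real_derivative beta) (at (X (i + 1)))" using D12_i by simp
  then show ?thesis
    by (rule has_field_derivative_transform_within_open[OF _ open_neq1]) (use ne DERIV_imp_deriv[OF LA2] in auto)
qed

end

locale hes = orb +
  fixes s :: nat
  assumes s1: "1 \<le> s"
begin

abbreviation "p \<equiv> s * n"
abbreviation "q \<equiv> real (s * m)"
definition "Xv j = X (int j)"
definition "nx j = (if j = p then 1 else Suc j)"
definition "ee j = (if j = p then q else 0)"

lemma p2: "2 \<le> p" using s1 n2 by (metis mult_le_mono one_le_numeral order_trans mult_1 le_numeral_extra(4))

lemma W_sum: "Wpq g p q x = (\<Sum>j = 1..p. Lfun g (x j) (x (nx j) + ee j))"
proof -
  obtain r where r: "p = Suc r" using p2 by (cases p) auto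
  have "(\<Sum>j = 1..p. Lfun g (x j) (x (nx j) + ee j)) = (\<Sum>j = 1..r. Lfun g (x j) (x (nx j) + ee j)) + Lfun g (x p) (x 1 + q)"
  proof -
    have "(\<Sum>j = 1..p. F j) = (\<Sum>j = 1..r. F j) + F p" for F :: "nat \<Rightarrow> real" unfolding r by simp
    then show ?thesis by (simp add: nx_def ee_def)
  qed
  also have "(\<Sum>j = 1..r. Lfun g (x j) (x (nx j) + ee j)) = (\<Sum>j = 1..r. Lfun g (x j) (x (j + 1)))"
    by (rule sum.cong) (auto simp: nx_def ee_def r)
  finally show ?thesis unfolding Wpq_def r by simp
qed

lemma base_V: "j \<in> {1..p} \<Longrightarrow> Xv (nx j) + ee j = X (int j + 1)"
proof -
  assume j: "j \<in> {1..p}"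
  show ?thesis
  proof (cases "j = p")
    case True
    have "X (int p + 1) = X 0 + (of_int (int p) + 1) * real m / real n" using lin[of "int p + 1"] by simp
    also have "\<dots> = X 1 + real s * real m" using lin[of 1] n2 by (simp add: field_simps)
    finally show ?thesis using True by (simp add: nx_def ee_def Xv_def)
  next
    case False then show ?thesis by (simp add: nx_def ee_def Xv_def add.commute)
  qed
qed

lemma nx_ne: "j \<in> {1..p} \<Longrightarrow> nx j \<noteq> j" using p2 by (auto simp: nx_def)
lemma nx_in: "j \<in> {1..p} \<Longrightarrow> nx j \<in> {1..p}" by (auto simp: nx_def)

definition "pr a = (if a = 1 then p else a - 1)"
lemma nx_eq_iff: "j \<in> {1..p} \<Longrightarrow> a \<in> {1..p} \<Longrightarrow> nx j = a \<longleftrightarrow> j = pr a"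
  using p2 by (auto simp: nx_def pr_def)

lemma nx_mod: "a \<in> {1..p} \<Longrightarrow> b \<in> {1..p} \<Longrightarrow> nx a = b \<longleftrightarrow> (a + 1) mod p = b mod p"
proof -
  assume a: "a \<in> {1..p}" and b: "b \<in> {1..p}"
  have bm: "b mod p = (if b = p then 0 else b)" using b by auto
  show ?thesis
  proof (cases "a = p")
    case True
    have "(a + 1) mod p = 1" using True p2 n2 by (simp add: mod_Suc)
    then show ?thesis using True b bm p2 n2 by (auto simp: nx_def)
  next
    case False
    then have "(a + 1) mod p = (if a + 1 = p then 0 else a + 1)" using a by auto
    then show ?thesis using False a b bm p2 by (auto simp: nx_def)
  qed
qed

lemma hess_off:
  assumes a: "a \<in> {1..p}" and b: "b \<in> {1..p}" and ab: "a \<noteq> b"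
  shows "((\<lambda>t. partial (Wpq g p q) b (Xv(a:=t))) has_real_derivative circ_matrix p alpha beta a b) (at (Xv a))"
proof -
  define cc where "cc i = (if i = a \<or> i = b then 0 else Xv i)" for i
  define kk where "kk i = (if i = a then 1 else 0::real)" for i
  define ll where "ll i = (if i = b then 1 else 0::real)" for i
  define cv where "cv j = cc (nx j) + ee j" for j
  have yv: "(Xv(a:=t, b:=\<sigma>)) i = cc i + ll i * \<sigma> + kk i * t" for i t \<sigma>
    using ab by (auto simp: cc_def kk_def ll_def)
  have Wf: "Wpq g p q (Xv(a:=t, b:=\<sigma>)) = (\<Sum>j=1..p. Lfun g (cc j + ll j * \<sigma> + kk j * t) (cv j + ll (nx j) * \<sigma> + kk (nx j) * t))" for t \<sigma>
    unfolding W_sum yv cv_def by (simp add: algebra_simps)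
  have base1: "cc j + ll j * Xv b + kk j * Xv a = X (int j)" for j
    using ab by (auto simp: cc_def kk_def ll_def Xv_def)
  have base2: "j \<in> {1..p} \<Longrightarrow> cv j + ll (nx j) * Xv b + kk (nx j) * Xv a = X (int j + 1)" for j
    using base_V[of j] base1[of "nx j"] unfolding cv_def by (simp add: algebra_simps Xv_def)
  define S where "S = (\<Inter>j\<in>{1..p}. {t. g (cc j + ll j * Xv b + kk j * t) \<noteq> g (cv j + ll (nx j) * Xv b + kk (nx j) * t)})"
  have oS: "open S" unfolding S_def by (rule open_INT) (auto intro: open_neq)
  have inS: "Xv a \<in> S" unfolding S_def using base1 base2 neq by auto
  define \<psi> where "\<psi> t = (\<Sum>j=1..p. ll j * D1 (cc j + ll j * Xv b + kk j * t) (cv j + ll (nx j) * Xv b + kk (nx j) * t)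
                                 + ll (nx j) * D2 (cc j + ll j * Xv b + kk j * t) (cv j + ll (nx j) * Xv b + kk (nx j) * t))" for t
  have dpart: "partial (Wpq g p q) b (Xv(a:=t)) = \<psi> t" if t: "t \<in> S" for t
  proof -
    have "((\<lambda>\<sigma>. Wpq g p q (Xv(a:=t, b:=\<sigma>))) has_real_derivative \<psi> t) (at (Xv b))"
      unfolding Wf \<psi>_def
      by (rule DERIV_sum, rule LAt) (use t in \<open>auto simp: S_def\<close>)
    moreover have "(Xv(a:=t)) b = Xv b" using ab by simp
    ultimately show ?thesis unfolding partial_def by (simp add: DERIV_imp_deriv)
  qed
  have d\<psi>: "(\<psi> has_real_derivative (\<Sum>j=1..p. ll j * (kk j * alpha + kk (nx j) * beta) + ll (nx j) * (kk j * beta + kk (nx j) * alpha))) (at (Xv a))"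
  proof -
    have "(\<psi> has_real_derivative (\<Sum>j=1..p. ll j * (kk j * D11 (X (int j)) (X (int j + 1)) + kk (nx j) * D12 (X (int j)) (X (int j + 1)))
          + ll (nx j) * (kk j * D12 (X (int j)) (X (int j + 1)) + kk (nx j) * D22 (X (int j)) (X (int j + 1))))) (at (Xv a))"
      unfolding \<psi>_def[abs_def]
      apply (rule DERIV_sum)
      subgoal for j
        using LBt[where ca="cc j" and la="ll j" and s="Xv b" and ka="kk j" and cb="cv j" and lb="ll (nx j)" and kb="kk (nx j)" and t="Xv a"]
          base1[of j] base2[of j] neq[of "int j"] by simp
      done
    then show ?thesis by (simp add: D11_i D12_i D22_i)
  qed
  have val: "(\<Sum>j=1..p. ll j * (kk j * alpha + kk (nx j) * beta) + ll (nx j) * (kk j * beta + kk (nx j) * alpha))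
        = circ_matrix p alpha beta a b"
  proof -
    have "(\<Sum>j=1..p. ll j * (kk j * alpha + kk (nx j) * beta) + ll (nx j) * (kk j * beta + kk (nx j) * alpha))
        = (\<Sum>j=1..p. (if j = b then (if nx b = a then beta else 0) else 0) + (if j = a then (if nx a = b then beta else 0) else 0))"
      by (rule sum.cong) (use ab in \<open>auto simp: ll_def kk_def\<close>)
    also have "\<dots> = (if nx b = a then beta else 0) + (if nx a = b then beta else 0)"
      using a b by (simp add: sum.distrib)
    also have "\<dots> = circ_matrix p alpha beta a b"
      unfolding circ_matrix_def using ab nx_mod[OF a b] nx_mod[OF b a] by simp
    finally show ?thesis .
  qed
  show ?thesis
    by (rule has_field_derivative_transform_within_open[OF _ oS inS]) (use d\<psi> val dpart in auto)
qed

lemma pr_in: "a \<in> {1..p} \<Longrightarrow> pr a \<in> {1..p}" using p2 by (auto simp: pr_def)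

lemma hess_diag:
  assumes a: "a \<in> {1..p}"
  shows "((\<lambda>t. partial (Wpq g p q) a (Xv(a:=t))) has_real_derivative circ_matrix p alpha beta a a) (at (Xv a))"
proof -
  define cc where "cc i = (if i = a then 0 else Xv i)" for i
  define ll where "ll i = (if i = a then 1 else 0::real)" for i
  define cv where "cv j = cc (nx j) + ee j" for j
  have yv: "(Xv(a:=\<sigma>)) i = cc i + ll i * \<sigma>" for i \<sigma>
    by (auto simp: cc_def ll_def)
  have Wf: "Wpq g p q (Xv(a:=\<sigma>)) = (\<Sum>j=1..p. Lfun g (cc j + ll j * \<sigma>) (cv j + ll (nx j) * \<sigma>))" for \<sigma>
    unfolding W_sum yv cv_def by (simp add: algebra_simps)
  have base1: "cc j + ll j * Xv a = X (int j)" for j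
    by (auto simp: cc_def ll_def Xv_def)
  have base2: "j \<in> {1..p} \<Longrightarrow> cv j + ll (nx j) * Xv a = X (int j + 1)" for j
    using base_V[of j] base1[of "nx j"] unfolding cv_def by (simp add: algebra_simps Xv_def)
  define S where "S = (\<Inter>j\<in>{1..p}. {t. g (cc j + ll j * t) \<noteq> g (cv j + ll (nx j) * t)})"
  have oS: "open S" unfolding S_def by (rule open_INT) (auto intro: open_neq)
  have inS: "Xv a \<in> S" unfolding S_def using base1 base2 neq by auto
  define \<psi> where "\<psi> t = (\<Sum>j=1..p. ll j * D1 (cc j + ll j * t) (cv j + ll (nx j) * t)
                                 + ll (nx j) * D2 (cc j + ll j * t) (cv j + ll (nx j) * t))" for t
  have dpart: "partial (Wpq g p q) a (Xv(a:=t)) = \<psi> t" if t: "t \<in> S" for t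
  proof -
    have "((\<lambda>\<sigma>. Wpq g p q (Xv(a:=\<sigma>))) has_real_derivative \<psi> t) (at t)"
      unfolding Wf \<psi>_def
      by (rule DERIV_sum, rule LA) (use t in \<open>auto simp: S_def\<close>)
    then show ?thesis unfolding partial_def by (simp add: DERIV_imp_deriv)
  qed
  have d\<psi>: "(\<psi> has_real_derivative (\<Sum>j=1..p. ll j * (ll j * alpha + ll (nx j) * beta) + ll (nx j) * (ll j * beta + ll (nx j) * alpha))) (at (Xv a))"
  proof -
    have "(\<psi> has_real_derivative (\<Sum>j=1..p. ll j * (ll j * D11 (X (int j)) (X (int j + 1)) + ll (nx j) * D12 (X (int j)) (X (int j + 1)))
          + ll (nx j) * (ll j * D12 (X (int j)) (X (int j + 1)) + ll (nx j) * D22 (X (int j)) (X (int j + 1))))) (at (Xv a))"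
      unfolding \<psi>_def[abs_def]
      apply (rule DERIV_sum)
      subgoal for j
        using LB[where ca="cc j" and ka="ll j" and cb="cv j" and kb="ll (nx j)" and la="ll j" and lb="ll (nx j)" and t="Xv a"]
          base1[of j] base2[of j] neq[of "int j"] by simp
      done
    then show ?thesis by (simp add: D11_i D12_i D22_i)
  qed
  have val: "(\<Sum>j=1..p. ll j * (ll j * alpha + ll (nx j) * beta) + ll (nx j) * (ll j * beta + ll (nx j) * alpha))
        = circ_matrix p alpha beta a a"
  proof -
    have "(\<Sum>j=1..p. ll j * (ll j * alpha + ll (nx j) * beta) + ll (nx j) * (ll j * beta + ll (nx j) * alpha))
        = (\<Sum>j=1..p. (if j = a then alpha else 0) + (if j = pr a then alpha else 0))"
    proof (rule sum.cong)
      fix j assume j: "j \<in> {1..p}"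
      have "ll (nx j) = (if j = pr a then 1 else 0)" using nx_eq_iff[OF j a] by (simp add: ll_def)
      moreover have "j = a \<Longrightarrow> j \<noteq> pr a" using nx_eq_iff[OF j a] nx_ne[OF j] by auto
      ultimately show "ll j * (ll j * alpha + ll (nx j) * beta) + ll (nx j) * (ll j * beta + ll (nx j) * alpha)
         = (if j = a then alpha else 0) + (if j = pr a then alpha else 0)" by (auto simp: ll_def)
    qed simp
    also have "\<dots> = 2 * alpha" using a pr_in[OF a] by (simp add: sum.distrib)
    also have "\<dots> = circ_matrix p alpha beta a a"
      unfolding circ_matrix_def using nx_mod[OF a a] nx_ne[OF a] by simp
    finally show ?thesis .
  qed
  show ?thesis
    by (rule has_field_derivative_transform_within_open[OF _ oS inS]) (use d\<psi> val dpart in auto)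
qed

end

locale dom = symc +
  assumes g1nz: "\<And>x. g1 x \<noteq> 0"
    and Om: "\<exists>\<Omega>. strictly_convex_domain \<Omega> \<and> frontier \<Omega> = range g \<and> (\<forall>z\<in>\<Omega>. winding_number g z = 1)"
begin

lemma g_nz: "g x \<noteq> 0"
proof
  assume h: "g x = 0"
  have "g (x + 1 / real n) = 0" using h rot by (simp add: rotR_def)
  then have "g (x + 1 / real n) = g x" using h by simp
  then obtain k :: int where "x + 1 / real n - x = of_int k" using per by blast
  then have "1 / real n = of_int k" by simp
  moreover have "0 < 1 / real n" "1 / real n < 1" using n2 by (auto simp: field_simps)
  ultimately have "0 < k" "k < 1" by simp_all
  then show False by simp
qed

lemma x0_ne1: "cis (2 * pi / real n) \<noteq> 1"
proof
  assume h: "cis (2 * pi / real n) = 1"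
  have "g (0 + 1 / real n) = g 0" using rot[of 0] h by (simp add: rotR_def)
  then obtain k :: int where "0 + 1 / real n - 0 = of_int k" using per by blast
  then have "1 / real n = of_int k" by simp
  moreover have "0 < 1 / real n" "1 / real n < 1" using n2 by (auto simp: field_simps)
  ultimately have "0 < k" "k < 1" by simp_all
  then show False by simp
qed

lemma zero_in:
  assumes sc: "strictly_convex_domain \<Omega>" and fr: "frontier \<Omega> = range g"
  shows "0 \<in> \<Omega>"
proof -
  have op: "open \<Omega>" and cv: "convex \<Omega>" using sc by (auto simp: strictly_convex_domain_def)
  define x0 where "x0 = cis (2 * pi / real n)"
  have pw: "x0 ^ j = w (int j)" for j
  proof -
    have "x0 ^ j = cis (real j * (2 * pi / real n))" unfolding x0_def by (rule Complex.DeMoivre)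
    then show ?thesis unfolding w_def by (simp add: field_simps)
  qed
  have "(\<Sum>j<n. x0 ^ j) = 0"
    using geometric_sum[OF x0_ne1[folded x0_def], of n] n2 by (simp add: x0_def Complex.DeMoivre)
  then have "(\<Sum>j<n. (1 / real n) *\<^sub>R (w (int j) * g 0)) = 0"
  proof -
    assume h: "(\<Sum>j<n. x0 ^ j) = 0"
    have "(\<Sum>j<n. (1 / real n) *\<^sub>R (w (int j) * g 0)) = (\<Sum>j<n. x0 ^ j) * (g 0 / of_nat n)"
      by (simp add: pw[symmetric] scaleR_conv_of_real sum_distrib_right sum_divide_distrib)
    then show ?thesis using h by simp
  qed
  moreover have "(\<Sum>j<n. (1 / real n) *\<^sub>R (w (int j) * g 0)) \<in> closure \<Omega>"
  proof (rule convex_sum)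
    show "convex (closure \<Omega>)" using cv by (rule convex_closure)
    show "(\<Sum>i<n. 1 / real n) = 1" using n2 by simp
    fix j assume "j \<in> {..<n}"
    have "w (int j) * g 0 = g (0 + real j / real n)" using rot_nat[of 0 j] by simp
    also have "\<dots> \<in> frontier \<Omega>" using fr by simp
    finally show "w (int j) * g 0 \<in> closure \<Omega>" using closure_Un_frontier by blast
  qed simp_all
  ultimately have "0 \<in> closure \<Omega>" by simp
  moreover have "0 \<notin> frontier \<Omega>" using fr g_nz by (metis imageE)
  ultimately show ?thesis using closure_Un_frontier by blast
qed

lemma not_tangent: "Im (g1 x * cnj (g x)) \<noteq> 0"
proof
  assume im0: "Im (g1 x * cnj (g x)) = 0"
  obtain \<Omega> where sc: "strictly_convex_domain \<Omega>" and fr: "frontier \<Omega> = range g" using Om by blast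
  have op: "open \<Omega>" and cv: "convex \<Omega>" using sc by (auto simp: strictly_convex_domain_def)
  have "0 \<in> \<Omega>" by (rule zero_in[OF sc fr])
  then obtain \<delta> where dpos: "\<delta> > 0" and ball: "ball 0 \<delta> \<subseteq> \<Omega>" using op open_contains_ball by blast
  define z where "z = g x"
  define v where "v = g1 x"
  define r where "r = cmod z"
  have rpos: "r > 0" using g_nz by (simp add: r_def z_def)
  define \<rho> where "\<rho> = Re (v * cnj z)"
  have vcz: "v * cnj z = of_real \<rho>" using im0 by (simp add: complex_eq_iff \<rho>_def v_def z_def)
  define lam where "lam = \<rho> / r^2"
  have "of_real (r^2) * v = v * (z * cnj z)" using complex_norm_square[of z] by (simp add: r_def)
  also have "\<dots> = (v * cnj z) * z" by (simp add: algebra_simps)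
  finally have "of_real (r^2) * v = of_real \<rho> * z" using vcz by simp
  then have vl: "v = lam *\<^sub>R z" using rpos by (simp add: lam_def scaleR_conv_of_real field_simps)
  have lnz: "lam \<noteq> 0" using g1nz[of x] vl by (auto simp: v_def)
  define e where "e = \<delta> * \<bar>lam\<bar> / 2"
  have epos: "e > 0" using dpos lnz by (simp add: e_def)
  have "(g has_derivative (\<lambda>h. h *\<^sub>R v)) (at x)" using d1[of x] by (simp add: has_vector_derivative_def v_def)
  then obtain d where dp: "d > 0" and dd: "\<And>y. norm (y - x) < d \<Longrightarrow> norm (g y - g x - (y - x) *\<^sub>R v) \<le> e * norm (y - x)"
    using epos unfolding has_derivative_at_alt by blast
  define ha where "ha = min (d/2) (1 / (2 * \<bar>lam\<bar>))"
  have hapos: "ha > 0" using dp lnz by (simp add: ha_def)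
  have had: "ha < d" using dp by (simp add: ha_def)
  have hal: "ha * \<bar>lam\<bar> \<le> 1/2" using lnz by (simp add: ha_def min_def field_simps)
  define h where "h = - sgn lam * ha"
  have habs: "\<bar>h\<bar> = ha" using lnz hapos by (simp add: h_def abs_mult)
  define sv where "sv = ha * \<bar>lam\<bar>"
  have hlam: "h * lam = - sv" using lnz by (simp add: h_def sv_def abs_sgn[symmetric] sgn_mult_abs mult.commute mult.left_commute)
  have sv0: "0 < sv" "sv < 1" using hapos lnz hal by (auto simp: sv_def)
  define P where "P = g (x + h)"
  have est: "norm (P - z - h *\<^sub>R v) \<le> e * \<bar>h\<bar>"
    using dd[of "x + h"] habs had by (simp add: P_def z_def)
  have hv: "h *\<^sub>R v = (- sv) *\<^sub>R z" using vl hlam by simp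
  define b where "b = (1 / sv) *\<^sub>R (P - (1 - sv) *\<^sub>R z)"
  have eqq: "P - (1 - sv) *\<^sub>R z = P - z - h *\<^sub>R v" using hv by (simp add: algebra_simps)
  have "norm b = norm (P - (1 - sv) *\<^sub>R z) / sv" using sv0 by (simp add: b_def)
  then have "norm b = norm (P - z - h *\<^sub>R v) / sv" by (simp only: eqq)
  also have "\<dots> \<le> e * \<bar>h\<bar> / sv" using est sv0 by (simp add: divide_right_mono)
  also have "e * \<bar>h\<bar> / sv = \<delta> / 2" using habs lnz hapos by (simp add: e_def sv_def field_simps)
  finally have "norm b < \<delta>" using dpos by simp
  then have bO: "b \<in> \<Omega>" using ball by auto
  have Pe: "P = (1 - (1 - sv)) *\<^sub>R b + (1 - sv) *\<^sub>R z" using sv0 by (simp add: b_def)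
  have zf: "z \<in> frontier \<Omega>" using fr by (simp add: z_def)
  have Pf: "P \<in> frontier \<Omega>" using fr by (simp add: P_def)
  have dis: "frontier \<Omega> \<inter> \<Omega> = {}" using op frontier_disjoint_eq by blast
  have bz: "b \<noteq> z" using bO zf dis by blast
  have "P \<in> open_segment b z" unfolding in_segment using bz sv0 Pe by (intro conjI exI[of _ "1 - sv"]) auto
  also have "open_segment b z \<subseteq> interior \<Omega>"
    by (rule in_interior_closure_convex_segment[OF cv]) (use bO op zf closure_Un_frontier interior_open in auto)
  finally have "P \<in> \<Omega>" using op interior_open by auto
  then show False using Pf dis by blast
qed

lemma valid_g: "valid_path g"
  unfolding valid_path_def
proof (rule C1_differentiable_imp_piecewise, unfold C1_differentiable_on_eq, intro conjI ballI)
  fix x show "g differentiable at x" using d1[of x] by (rule differentiableI_vector)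
next
  have "continuous_on {0..1} g1" using g1_cont by (rule continuous_on_subset) simp
  moreover have "\<And>x. vector_derivative g (at x) = g1 x" using d1 by (rule vector_derivative_at)
  ultimately show "continuous_on {0..1} (\<lambda>x. vector_derivative g (at x))" by simp
qed

lemma orient: "Im (g1 x * cnj (g x)) > 0"
proof (rule ccontr)
  define f where "f x = Im (g1 x * cnj (g x))" for x
  have fc: "continuous_on UNIV f" unfolding f_def
    by (intro continuous_intros g_cont g1_cont)
  assume "\<not> Im (g1 x * cnj (g x)) > 0"
  then have fx: "f x < 0" using not_tangent[of x] by (simp add: f_def)
  have neg: "f y < 0" for y
  proof (rule ccontr)
    assume "\<not> f y < 0"
    then have fy: "f y \<ge> 0" by simp
    have "\<exists>t. f t = 0"
    proof (cases "x \<le> y")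
      case True
      have "continuous_on {x..y} f" using continuous_on_subset[OF fc] by blast
      from IVT'[of f x 0 y, OF _ _ True this] fx fy show ?thesis by auto
    next
      case False
      then have le: "y \<le> x" by simp
      have "continuous_on {y..x} f" using continuous_on_subset[OF fc] by blast
      from IVT2'[of f x 0 y, OF _ _ le this] fx fy show ?thesis by auto
    qed
    then show False using not_tangent by (auto simp: f_def)
  qed
  obtain \<Omega> where sc: "strictly_convex_domain \<Omega>" and fr: "frontier \<Omega> = range g"
    and wn: "\<forall>z\<in>\<Omega>. winding_number g z = 1" using Om by blast
  have w1: "winding_number g 0 = 1" using wn zero_in[OF sc fr] by blast
  have nimg: "0 \<notin> path_image g" using g_nz by (auto simp: path_image_def)
  obtain t0 where t0: "t0 \<in> {0..1}" and tmin: "\<And>y. y \<in> {0..1} \<Longrightarrow> - f t0 \<le> - f y"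
  proof -
    have "continuous_on {0..1} (\<lambda>t. - f t)" using continuous_on_subset[OF fc] by (intro continuous_intros) blast
    from continuous_attains_inf[OF compact_Icc _ this] show ?thesis using that by auto
  qed
  have epos: "0 < - f t0" using neg[of t0] by simp
  have rd: "vector_derivative (reversepath g) (at y) = - g1 (1 - y)" for y
  proof -
    have "((\<lambda>y. g (1 + (-1) * y)) has_vector_derivative (-1) *\<^sub>R g1 (1 + (-1) * y)) (at y)"
      by (rule vd_aff) (rule d1)
    then have "(reversepath g has_vector_derivative - g1 (1 - y)) (at y)" by (simp add: reversepath_def)
    then show ?thesis by (rule vector_derivative_at)
  qed
  have "0 < Re (winding_number (reversepath g) 0)"
  proof (rule winding_number_pos_lt[OF _ _ epos])
    show "valid_path (reversepath g)" using valid_g by simp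
    show "0 \<notin> path_image (reversepath g)" using nimg by simp
    fix y :: real assume y: "0 < y" "y < 1"
    have "- f t0 \<le> - f (1 - y)" using tmin y by simp
    then show "- f t0 \<le> Im (vector_derivative (reversepath g) (at y) * cnj (reversepath g y - 0))"
      unfolding rd by (simp add: f_def reversepath_def)
  qed
  moreover have "winding_number (reversepath g) 0 = - 1"
    using winding_number_reversepath[OF valid_path_imp_path[OF valid_g] nimg] w1 by simp
  ultimately show False by simp
qed

end

locale full = orb + dom
begin

lemma cm_i: "cmod (g (X (i + 1)) - g (X i)) = cmod (g (X 1) - g (X 0))"
  unfolding X_shift1 by (subst X_shift0) (rule shift_cm)

lemma curv_i: "curvature g1 g2 (X i) = curvature g1 g2 (X 0)"
proof -
  have wc: "cnj (w j) * w j = 1" for j by (simp add: w_def cis_cnj cis_mult)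
  have "cnj (w (i * int m) * g1 (X 0)) * (w (i * int m) * g2 (X 0)) = (cnj (w (i * int m)) * w (i * int m)) * (cnj (g1 (X 0)) * g2 (X 0))"
    by (simp add: algebra_simps)
  note prod = this
  have xi: "X i = X 0 + of_int (i * int m) / real n" by (rule X_shift0)
  have e1: "g1 (X i) = w (i * int m) * g1 (X 0)" by (simp only: xi rot1)
  have e2: "g2 (X i) = w (i * int m) * g2 (X 0)" by (simp only: xi rot2)
  show ?thesis unfolding curvature_def e1 e2 prod wc mult_1_left norm_mult w_norm by simp
qed

lemma perp: "Re (cnj (g (X 0)) * g1 (X 0)) = 0"
proof -
  define z where "z = g (X 0)"
  define v where "v = g1 (X 0)"
  define om where "om = w (int m)"
  have X1: "X 1 = X 0 + of_int (int m) / real n" using X_step[of 0] by simp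
  have X1': "X 1 = of_int J / real n - X 0" using Jdef X_step[of 0] by simp
  have a: "om * z = w J * cnj z" using rotj[of "X 0" "int m"] refl0[of J "X 0"] X1 X1' by (simp add: om_def z_def)
  have b: "om * v = - (w J * cnj v)" using rot1[of "X 0" "int m"] refl1[of J "X 0"] X1 X1' by (simp add: om_def v_def)
  have wc: "cnj (w j) * w j = 1" for j by (simp add: w_def cis_cnj cis_mult)
  have l1: "(om * z) * cnj (om * v) = (cnj om * om) * (z * cnj v)" by (simp add: algebra_simps)
  have l2: "cnj om * om = 1" using wc by (simp add: om_def)
  have l: "(om * z) * cnj (om * v) = z * cnj v" by (simp only: l1 l2 mult_1_left)
  have r1: "(om * z) * cnj (om * v) = - ((cnj (w J) * w J) * (cnj z * v))" unfolding a b by (simp add: algebra_simps)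
  have r: "(om * z) * cnj (om * v) = - (cnj z * v)" by (simp only: r1 wc mult_1_left)
  have "z * cnj v = - (cnj z * v)" using l r by metis
  then have "Re (z * cnj v) = - Re (cnj z * v)" by simp
  moreover have "Re (z * cnj v) = Re (cnj z * v)" by simp
  ultimately show ?thesis by (simp add: z_def v_def)
qed

lemma speed_perp:
  assumes cs: "\<And>x. cmod (g1 x) = c"
  shows "Re (cnj (g1 x) * g2 x) = 0"
proof -
  have "((\<lambda>x. hR x ^ 2 + hI x ^ 2) has_real_derivative 2 * hR x * kR x + 2 * hI x * kI x) (at x)"
    by (rule derivative_eq_intros dhR dhI refl | simp)+
  moreover have "(\<lambda>x. hR x ^ 2 + hI x ^ 2) = (\<lambda>x. c^2)"
    using cs by (auto simp: hR_def hI_def cmod_power2[symmetric])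
  ultimately have "((\<lambda>x. c^2) has_real_derivative 2 * hR x * kR x + 2 * hI x * kI x) (at x)" by simp
  then have "2 * hR x * kR x + 2 * hI x * kI x = 0" using DERIV_const DERIV_unique by blast
  then show ?thesis by (simp add: hR_def hI_def kR_def kI_def)
qed

lemma ab_formula:
  assumes cs: "\<And>x. cmod (g1 x) = c"
  shows "alpha = c^2 * sin (real m * pi / real n) * (sin (real m * pi / real n) / cmod (g (X 1) - g (X 0)) - curvature g1 g2 (X 0))
       \<and> beta = c^2 * sin (real m * pi / real n) ^ 2 / cmod (g (X 1) - g (X 0))"
proof -
  define z where "z = g (X 0)"
  define v where "v = g1 (X 0)"
  define ww where "ww = g2 (X 0)"
  define om where "om = w (int m)"
  define ph where "ph = real m * pi / real n"
  define tau where "tau = Im (cnj z * v)"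
  define ka where "ka = curvature g1 g2 (X 0)"
  have X1: "X 1 = X 0 + of_int (int m) / real n" using X_step[of 0] by simp
  have gX1: "g (X 1) = om * z" using rotj[of "X 0" "int m"] X1 by (simp add: om_def z_def)
  have g1X1: "g1 (X 1) = om * v" using rot1[of "X 0" "int m"] X1 by (simp add: om_def v_def)
  have omd: "om = cis (2 * ph)" by (simp add: om_def w_def ph_def ac_simps)
  have sp: "sin ph > 0"
  proof -
    have phe: "ph = pi * (real m / real n)" by (simp add: ph_def)
    have "0 < ph" unfolding phe using mpos pi_gt_zero by (intro mult_pos_pos) auto
    moreover have "pi * (real m / real n) < pi * 1" using mpos pi_gt_zero by (intro mult_strict_left_mono) auto
    ultimately have "0 < ph" "ph < pi" unfolding phe by auto
    then show ?thesis by (rule sin_gt_zero)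
  qed
  have A: "cnj z * v = \<i> * of_real tau" using perp by (simp add: complex_eq_iff tau_def z_def v_def)
  have cv: "cmod v = c" using cs by (simp add: v_def)
  have cpos: "c > 0" using cv g1nz[of "X 0"] by (auto simp: v_def)
  have taupos: "tau > 0" using orient[of "X 0"] by (simp add: tau_def z_def v_def mult.commute)
  have "cmod (cnj z * v) = cmod z * c" using cv by (simp add: norm_mult)
  then have tau: "tau = cmod z * c" using A taupos by (simp add: norm_mult)
  have zr: "z \<noteq> 0" using g_nz by (simp add: z_def)
  have vww: "cnj v * ww = \<i> * of_real (ka * c^3)"
    using speed_perp[OF cs, of "X 0"] cv cpos by (simp add: complex_eq_iff ka_def curvature_def v_def ww_def)
  have vv: "cnj v * v = of_real (c^2)" using complex_norm_square[of v] cv by (simp add: mult.commute)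
  have "(cnj z * ww) * of_real (c^2) = (cnj z * v) * (cnj v * ww)" unfolding vv[symmetric] by (simp add: algebra_simps)
  also have "\<dots> = of_real (- ka * c * tau) * of_real (c^2)" unfolding A vww by (simp add: algebra_simps power2_eq_square power3_eq_cube)
  finally have "(cnj z * ww) * of_real (c^2) = of_real (- ka * c * tau) * of_real (c^2)" .
  then have B: "cnj z * ww = of_real (- ka * c * tau)" by (subst (asm) mult_cancel_right) (use cpos in simp)
  note C = calc_ab[OF omd sp A tau zr B cv]
  have "alpha = (v \<bullet> v + (z - om*z) \<bullet> ww) / cmod (z - om*z) - ((z - om*z) \<bullet> v)^2 / cmod (z - om*z)^3"
    unfolding alpha_def D11_cx gX1 by (simp add: z_def v_def ww_def)
  also have "\<dots> = c^2 * sin ph * (sin ph / cmod (om*z - z) - ka)" by (rule C(1))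
  finally have a: "alpha = c^2 * sin ph * (sin ph / cmod (om*z - z) - ka)" .
  have "beta = - (v \<bullet> (om * v)) / cmod (z - om*z) - ((z - om*z) \<bullet> v) * ((om*z - z) \<bullet> (om * v)) / cmod (z - om*z)^3"
    unfolding beta_def D12_cx gX1 g1X1 by (simp add: z_def v_def)
  also have "\<dots> = c^2 * sin ph ^ 2 / cmod (om*z - z)" by (rule C(2))
  finally have b: "beta = c^2 * sin ph ^ 2 / cmod (om*z - z)" .
  show ?thesis using a b gX1 by (simp add: ph_def ka_def z_def)
qed

end


theorem mainTheorem17:
  fixes m n s :: nat
    and \<gamma> \<gamma>1 \<gamma>2 :: "real \<Rightarrow> complex"
    and Z :: "int \<Rightarrow> complex" and X :: "int \<Rightarrow> real"
  assumes "coprime m n" and "1 \<le> m" and "m \<le> n - 1"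
    and "Dn_billiard_param n \<gamma> \<gamma>1 \<gamma>2"
    and "billiard_orbit \<gamma> \<gamma>1 Z X"
    and "Dn_symmetric_orbit n Z"
    and "birkhoff X"
    and "X \<in> XX (int n) (real m)"
    and "1 \<le> s"
  shows "let p = s * n; q = real (s * m); Xv = (\<lambda>j::nat. X (int j))
         in \<exists>\<alpha> \<beta>.
           (\<forall>i. ((\<lambda>t. deriv (\<lambda>u. Lfun \<gamma> (X (i - 1)) u) t) has_real_derivative \<alpha>) (at (X i))
              \<and> ((\<lambda>t. deriv (\<lambda>u. Lfun \<gamma> u (X (i + 1))) t) has_real_derivative \<alpha>) (at (X i))
              \<and> ((\<lambda>t. deriv (\<lambda>u. Lfun \<gamma> u t) (X i)) has_real_derivative \<beta>) (at (X (i + 1))))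
         \<and> (\<forall>a\<in>{1..p}. \<forall>b\<in>{1..p}.
              ((\<lambda>t. partial (Wpq \<gamma> p q) b (Xv(a := t))) has_real_derivative circ_matrix p \<alpha> \<beta> a b) (at (Xv a)))
         \<and> (\<forall>N::int. \<forall>a\<in>{1..p}.
              (\<Sum>b = 1..p. circ_matrix p \<alpha> \<beta> a b * sin (2 * pi * real_of_int N * real b / real p))
                = (2 * \<alpha> + 2 * \<beta> * cos (2 * pi * real_of_int N / real p)) * sin (2 * pi * real_of_int N * real a / real p)
            \<and> (\<Sum>b = 1..p. circ_matrix p \<alpha> \<beta> a b * cos (2 * pi * real_of_int N * real b / real p))
                = (2 * \<alpha> + 2 * \<beta> * cos (2 * pi * real_of_int N / real p)) * cos (2 * pi * real_of_int N * real a / real p))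
         \<and> (\<forall>c. (\<forall>x. cmod (\<gamma>1 x) = c) \<longrightarrow>
              (\<forall>i j. cmod (Z (i + 1) - Z i) = cmod (Z (j + 1) - Z j)
                     \<and> curvature \<gamma>1 \<gamma>2 (X i) = curvature \<gamma>1 \<gamma>2 (X j))
            \<and> (\<forall>i. \<alpha> = c^2 * sin (real m * pi / real n)
                        * (sin (real m * pi / real n) / cmod (Z (i + 1) - Z i) - curvature \<gamma>1 \<gamma>2 (X i))
                 \<and> \<beta> = c^2 * sin (real m * pi / real n) ^ 2 / cmod (Z (i + 1) - Z i)))"
proof -
  have n2: "2 \<le> n" using assms(2,3) by linarith
  have D: "(\<forall>x. (\<gamma> has_vector_derivative \<gamma>1 x) (at x)) \<and>
     (\<forall>x. (\<gamma>1 has_vector_derivative \<gamma>2 x) (at x)) \<and>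
     continuous_on UNIV \<gamma>2 \<and>
     (\<forall>x. \<gamma>1 x \<noteq> 0) \<and>
     (\<forall>x y. \<gamma> x = \<gamma> y \<longleftrightarrow> (\<exists>k::int. x - y = real_of_int k)) \<and>
     (\<exists>\<Omega>. strictly_convex_domain \<Omega> \<and> frontier \<Omega> = range \<gamma> \<and>
          (\<forall>z\<in>\<Omega>. winding_number \<gamma> z = 1)) \<and>
     (\<forall>x. \<gamma> (x + 1 / real n) = rotR n (\<gamma> x)) \<and>
     (\<forall>x. \<gamma> (- x) = reflS (\<gamma> x))" using assms(4) unfolding Dn_billiard_param_def .
  note P = D[THEN conjunct1, rule_format] D[THEN conjunct2, THEN conjunct1, rule_format]
    D[THEN conjunct2, THEN conjunct2, THEN conjunct2, THEN conjunct1, rule_format]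
    D[THEN conjunct2, THEN conjunct2, THEN conjunct2, THEN conjunct2, THEN conjunct1, rule_format]
    D[THEN conjunct2, THEN conjunct2, THEN conjunct2, THEN conjunct2, THEN conjunct2, THEN conjunct1]
    D[THEN conjunct2, THEN conjunct2, THEN conjunct2, THEN conjunct2, THEN conjunct2, THEN conjunct2, THEN conjunct1, rule_format]
    D[THEN conjunct2, THEN conjunct2, THEN conjunct2, THEN conjunct2, THEN conjunct2, THEN conjunct2, THEN conjunct2, rule_format]
  interpret S: symc \<gamma> \<gamma>1 \<gamma>2 n
    by unfold_locales (fact P n2)+
  have gz: "\<And>i. \<gamma> (X i) = Z i" using assms(5) unfolding billiard_orbit_def by blast
  from S.orbit_structure[OF assms(1,2,3) gz assms(6,7,8)] obtain J :: int where
    lin: "\<And>i. X i = X 0 + of_int i * real m / real n" and J: "2 * X 0 + real m / real n = of_int J / real n"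
    by blast
  interpret F: full \<gamma> \<gamma>1 \<gamma>2 n X m J
    by unfold_locales (fact P lin J assms(2) assms(3))+
  interpret H: hes \<gamma> \<gamma>1 \<gamma>2 n X m J s
    by unfold_locales (fact assms(9))
  have Xv: "(\<lambda>j::nat. X (int j)) = H.Xv" by (simp add: fun_eq_iff H.Xv_def)
  have p2: "2 \<le> s * n" by (rule H.p2)
  have hess: "((\<lambda>t. partial (Wpq \<gamma> (s * n) (real (s * m))) b (H.Xv(a := t))) has_real_derivative circ_matrix (s * n) F.alpha F.beta a b) (at (H.Xv a))"
    if a: "a \<in> {1..s * n}" and b: "b \<in> {1..s * n}" for a b
  proof (cases "a = b")
    case True then show ?thesis using H.hess_diag[OF a] by simp
  next
    case False then show ?thesis by (rule H.hess_off[OF a b])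
  qed
  have C4: "\<forall>i. F.alpha = c\<^sup>2 * sin (real m * pi / real n) * (sin (real m * pi / real n) / cmod (Z (i + 1) - Z i) - curvature \<gamma>1 \<gamma>2 (X i))
       \<and> F.beta = c\<^sup>2 * sin (real m * pi / real n) ^ 2 / cmod (Z (i + 1) - Z i)"
    if cs: "\<forall>x. cmod (\<gamma>1 x) = c" for c
  proof
    fix i
    have ab: "F.alpha = c^2 * sin (real m * pi / real n) * (sin (real m * pi / real n) / cmod (\<gamma> (X 1) - \<gamma> (X 0)) - curvature \<gamma>1 \<gamma>2 (X 0))
       \<and> F.beta = c^2 * sin (real m * pi / real n) ^ 2 / cmod (\<gamma> (X 1) - \<gamma> (X 0))"
      using F.ab_formula cs by blast
    have e1: "cmod (Z (i + 1) - Z i) = cmod (\<gamma> (X 1) - \<gamma> (X 0))" using F.cm_i[of i] gz by simp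
    have e2: "curvature \<gamma>1 \<gamma>2 (X i) = curvature \<gamma>1 \<gamma>2 (X 0)" by (rule F.curv_i)
    show "F.alpha = c\<^sup>2 * sin (real m * pi / real n) * (sin (real m * pi / real n) / cmod (Z (i + 1) - Z i) - curvature \<gamma>1 \<gamma>2 (X i))
       \<and> F.beta = c\<^sup>2 * sin (real m * pi / real n) ^ 2 / cmod (Z (i + 1) - Z i)"
      unfolding e1 e2 using ab by blast
  qed
  have C4': "cmod (Z (i + 1) - Z i) = cmod (Z (j + 1) - Z j) \<and> curvature \<gamma>1 \<gamma>2 (X i) = curvature \<gamma>1 \<gamma>2 (X j)" for i j
    using F.cm_i[of i] F.cm_i[of j] F.curv_i[of i] F.curv_i[of j] gz by simp
  show ?thesis
    unfolding Let_def Xv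
    apply (rule exI[of _ F.alpha], rule exI[of _ F.beta])
    apply (intro conjI)
    subgoal by (intro allI conjI) (rule F.conj1a F.conj1b F.conj1c)+
    subgoal by (intro ballI) (rule hess)
    subgoal by (intro allI ballI) (rule eig[OF p2])
    subgoal using C4 C4' by blast
    done
qed

end
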